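(* For every integer $m \geq 3$, $\gamma_{b,2}(P_m \square C_6) = m + c$, where $c \in \{0,1\}$ if $m \equiv 0 \pmod 4$ and $c = 1$ if $m \equiv 1, 2,$ or $3 \pmod 4$.
   Context: For a graph $G$, a $2$-limited broadcast is a function $f: V(G) \to \{0,1,2\}$. A vertex $u$ hears the broadcast from $v$ if $f(v) > 0$ and $d(u,v) \leq f(v)$, where $d$ is the distance in $G$. The broadcast $f$ is dominating if every vertex of $G$ hears the broadcast from some vertex. The cost of $f$ is $\sum_{v \in V(G)} f(v)$. The $2$-limited broadcast domination number $\gamma_{b,2}(G)$ is the minimum cost of a $2$-limited dominating broadcast on $G$. $C_6$ denotes the cycle on $6$ vertices, $P_m$ the path on $m$ vertices, and $\square$ the Cartesian product of graphs. *)

theory Defs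
  imports Main
begin

definition gdist :: "('a \<Rightarrow> 'a \<Rightarrow> bool) \<Rightarrow> 'a \<Rightarrow> 'a \<Rightarrow> nat" where
  "gdist E u v = (LEAST k. (E ^^ k) u v)"

definition path_adj :: "nat \<Rightarrow> nat \<Rightarrow> nat \<Rightarrow> bool" where
  "path_adj m i j \<longleftrightarrow> i < m \<and> j < m \<and> (i + 1 = j \<or> j + 1 = i)"

definition cycle_adj :: "nat \<Rightarrow> nat \<Rightarrow> nat \<Rightarrow> bool" where
  "cycle_adj n i j \<longleftrightarrow> i < n \<and> j < n \<and> i \<noteq> j \<and> (j = (i + 1) mod n \<or> i = (j + 1) mod n)"

definition cart_adj :: "('a \<Rightarrow> 'a \<Rightarrow> bool) \<Rightarrow> ('b \<Rightarrow> 'b \<Rightarrow> bool) \<Rightarrow> 'a \<times> 'b \<Rightarrow> 'a \<times> 'b \<Rightarrow> bool" where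
  "cart_adj A B x y \<longleftrightarrow> (A (fst x) (fst y) \<and> snd x = snd y) \<or> (fst x = fst y \<and> B (snd x) (snd y))"

definition limited_broadcast :: "nat \<Rightarrow> 'a set \<Rightarrow> ('a \<Rightarrow> nat) \<Rightarrow> bool" where
  "limited_broadcast k V f \<longleftrightarrow> (\<forall>v\<in>V. f v \<le> k) \<and> (\<forall>v. v \<notin> V \<longrightarrow> f v = 0)"

definition hears :: "('a \<Rightarrow> 'a \<Rightarrow> bool) \<Rightarrow> ('a \<Rightarrow> nat) \<Rightarrow> 'a \<Rightarrow> 'a \<Rightarrow> bool" where
  "hears E f u v \<longleftrightarrow> f v > 0 \<and> gdist E u v \<le> f v"

definition dominating_broadcast :: "'a set \<Rightarrow> ('a \<Rightarrow> 'a \<Rightarrow> bool) \<Rightarrow> ('a \<Rightarrow> nat) \<Rightarrow> bool" where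
  "dominating_broadcast V E f \<longleftrightarrow> (\<forall>u\<in>V. \<exists>v\<in>V. hears E f u v)"

definition broadcast_cost :: "'a set \<Rightarrow> ('a \<Rightarrow> nat) \<Rightarrow> nat" where
  "broadcast_cost V f = (\<Sum>v\<in>V. f v)"

definition gamma_b :: "nat \<Rightarrow> 'a set \<Rightarrow> ('a \<Rightarrow> 'a \<Rightarrow> bool) \<Rightarrow> nat" where
  "gamma_b k V E = Inf {broadcast_cost V f | f. limited_broadcast k V f \<and> dominating_broadcast V E f}"

definition grid_V :: "nat \<Rightarrow> (nat \<times> nat) set" where
  "grid_V m = {..<m} \<times> {..<6}"

definition grid_E :: "nat \<Rightarrow> nat \<times> nat \<Rightarrow> nat \<times> nat \<Rightarrow> bool" where
  "grid_E m = cart_adj (path_adj m) (cycle_adj 6)"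

end

theory Submission
  imports Defs
begin

type_synonym st = "nat \<times> nat \<times> nat \<times> nat"

definition step :: "st \<Rightarrow> nat \<Rightarrow> nat \<Rightarrow> st" where
  "step s a b = (case s of (r2, r1, e0, e1) \<Rightarrow>
     (r1 - (3*a+b), 6 - e0 - (5*a+3*b), min 6 (e1+3*a+b), min 6 a))"

definition pitab :: "(st \<times> int) list" where
  "pitab = [((0,0,0,0),0), ((0,0,1,0),0), ((0,0,2,0),0), ((0,0,3,0),0), ((0,0,3,1),0), ((0,0,4,0),0), ((0,0,4,1),0), ((0,0,5,0),0), ((0,0,5,1),0), ((0,0,6,0),(-1)), ((0,0,6,1),(-1)), ((0,0,6,2),(-1)), ((0,0,6,3),(-1)), ((0,0,6,4),(-1)), ((0,0,6,5),(-1)), ((0,0,6,6),(-2)), ((0,1,0,0),1), ((0,1,1,0),1), ((0,1,3,1),0), ((0,2,0,0),1), ((0,2,1,0),1), ((0,3,0,0),1), ((0,3,1,0),1), ((0,4,0,0),2), ((0,5,0,0),2), ((0,6,0,0),2), ((1,0,2,0),1), ((1,0,3,0),1), ((1,0,4,0),1), ((1,0,4,1),1), ((1,0,5,0),1), ((1,0,5,1),1), ((1,1,3,1),1), ((1,2,1,0),1), ((1,3,1,0),1), ((1,5,0,0),2), ((1,6,0,0),2), ((2,0,2,0),2), ((2,0,3,0),2), ((2,0,4,0),2), ((2,0,4,1),2), ((2,1,3,1),2), ((2,2,1,0),2), ((2,3,1,0),2), ((2,5,0,0),2), ((2,6,0,0),2), ((3,0,2,0),4), ((3,0,3,0),4),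 ((3,1,3,1),4), ((3,3,1,0),4), ((3,5,0,0),4), ((3,6,0,0),4), ((4,0,2,0),6), ((4,3,1,0),6), ((4,6,0,0),6), ((5,3,1,0),8), ((5,6,0,0),8), ((6,6,0,0),9)]"

definition choices :: "(nat \<times> nat) list" where
  "choices = List.product [0..<7] [0..<7]"

definition check_trans :: bool where
  "check_trans = list_all (\<lambda>(s,p). list_all (\<lambda>(a,b). fst s \<le> a \<longrightarrow>
      (case map_of pitab (step s a b) of None \<Rightarrow> False | Some q \<Rightarrow> p \<le> int (2*a+b) - 1 + q)) choices) pitab"

definition check_final :: bool where
  "check_final = list_all (\<lambda>(s,p). fst s = 0 \<and> fst (snd s) = 0 \<longrightarrow> p \<le> 0) pitab"

definition check_first :: bool where
  "check_first = list_all (\<lambda>(a,b). case map_of pitab (step (0,0,0,0) a b) of None \<Rightarrow> False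
      | Some q \<Rightarrow> 2 \<le> int (2*a+b) + q) choices"

lemma check_trans: check_trans by code_simp
lemma check_final: check_final by code_simp
lemma check_first: check_first by code_simp


lemma map_of_step:
  assumes "map_of pitab s = Some p" "a \<le> 6" "b \<le> 6" "fst s \<le> a"
  shows "\<exists>q. map_of pitab (step s a b) = Some q \<and> p \<le> int (2*a+b) - 1 + q"
proof -
  have mem: "(s,p) \<in> set pitab" using assms(1) by (rule map_of_SomeD)
  have ab: "(a,b) \<in> set choices" using assms(2,3) by (auto simp: choices_def)
  have "\<forall>(s,p)\<in>set pitab. \<forall>(a,b)\<in>set choices. fst s \<le> a \<longrightarrow>
      (case map_of pitab (step s a b) of None \<Rightarrow> False | Some q \<Rightarrow> p \<le> int (2*a+b) - 1 + q)"
    using check_trans unfolding check_trans_def list_all_iff by blast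
  then have "case map_of pitab (step s a b) of None \<Rightarrow> False | Some q \<Rightarrow> p \<le> int (2*a+b) - 1 + q"
    using mem ab assms(4) by fastforce
  then show ?thesis by (auto split: option.splits)
qed

lemma map_of_final:
  assumes "map_of pitab s = Some p" "fst s = 0" "fst (snd s) = 0"
  shows "p \<le> 0"
proof -
  have mem: "(s,p) \<in> set pitab" using assms(1) by (rule map_of_SomeD)
  then show ?thesis using check_final assms unfolding check_final_def list_all_iff by fastforce
qed

lemma map_of_first:
  assumes "a \<le> 6" "b \<le> 6"
  shows "\<exists>q. map_of pitab (step (0,0,0,0) a b) = Some q \<and> 2 \<le> int (2*a+b) + q"
proof -
  have ab: "(a,b) \<in> set choices" using assms by (auto simp: choices_def)
  then have "case map_of pitab (step (0,0,0,0) a b) of None \<Rightarrow> False | Some q \<Rightarrow> 2 \<le> int (2*a+b) + q"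
    using check_first unfolding check_first_def list_all_iff by fastforce
  then show ?thesis by (auto split: option.splits)
qed

definition p2 :: "(nat \<Rightarrow> nat) \<Rightarrow> (nat \<Rightarrow> nat) \<Rightarrow> nat \<Rightarrow> nat" where
  "p2 a b k = (if k < 2 then 6 else (if 4 \<le> k then a(k-4) else 0) + (if 3 \<le> k then 3*a(k-3)+b(k-3) else 0)
      + 5*a(k-2)+3*b(k-2) + 3*a(k-1)+b(k-1))"
definition p1 :: "(nat \<Rightarrow> nat) \<Rightarrow> (nat \<Rightarrow> nat) \<Rightarrow> nat \<Rightarrow> nat" where
  "p1 a b k = (if k < 1 then 6 else (if 3 \<le> k then a(k-3) else 0) + (if 2 \<le> k then 3*a(k-2)+b(k-2) else 0)
      + 5*a(k-1)+3*b(k-1))"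
definition pc :: "(nat \<Rightarrow> nat) \<Rightarrow> (nat \<Rightarrow> nat) \<Rightarrow> nat \<Rightarrow> nat" where
  "pc a b k = (if 2 \<le> k then a(k-2) else 0) + (if 1 \<le> k then 3*a(k-1)+b(k-1) else 0)"
definition pn :: "(nat \<Rightarrow> nat) \<Rightarrow> nat \<Rightarrow> nat" where
  "pn a k = (if 1 \<le> k then a(k-1) else 0)"
definition stS :: "(nat \<Rightarrow> nat) \<Rightarrow> (nat \<Rightarrow> nat) \<Rightarrow> nat \<Rightarrow> st" where
  "stS a b k = (6 - p2 a b k, 6 - p1 a b k, min 6 (pc a b k), min 6 (pn a k))"
definition covc :: "(nat \<Rightarrow> nat) \<Rightarrow> (nat \<Rightarrow> nat) \<Rightarrow> nat \<Rightarrow> nat" where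
  "covc a b i = (if 2 \<le> i then a(i-2) else 0) + (if 1 \<le> i then 3*a(i-1)+b(i-1) else 0)
      + 5*a i+3*b i+3*a(i+1)+b(i+1)+a(i+2)"

lemma nat_cases4:
  obtains "k = 0" | "k = Suc 0" | "k = Suc (Suc 0)" | "k = Suc (Suc (Suc 0))" | j where "k = Suc (Suc (Suc (Suc j)))"
  by (metis not0_implies_Suc)

lemma clamp1: "(6::nat) - x - (3 * min 6 a + min 6 b) = 6 - (x + 3*a + b)"
  by (simp add: min_def add.assoc)
lemma clamp2: "(6::nat) - min 6 x - (5 * min 6 a + 3 * min 6 b) = 6 - (x + 5*a + 3*b)"
  by (simp add: min_def add.assoc)
lemma clamp3: "min (6::nat) (min 6 x + 3 * min 6 a + min 6 b) = min 6 (x + 3*a + b)"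
  by (simp add: min_def)

lemma stS_Suc: "stS a b (Suc k) = step (stS a b k) (min 6 (a k)) (min 6 (b k))"
proof -
  have A: "6 - p2 a b (Suc k) = (6 - p1 a b k) - (3 * min 6 (a k) + min 6 (b k))"
    unfolding clamp1 by (cases k rule: nat_cases4; simp add: p2_def p1_def)
  have B: "6 - p1 a b (Suc k) = 6 - min 6 (pc a b k) - (5 * min 6 (a k) + 3 * min 6 (b k))"
    unfolding clamp2 by (cases k rule: nat_cases4; simp add: p1_def pc_def)
  have C: "min 6 (pc a b (Suc k)) = min 6 (min 6 (pn a k) + 3 * min 6 (a k) + min 6 (b k))"
    unfolding clamp3 by (cases k rule: nat_cases4; simp add: pc_def pn_def)
  have D: "min 6 (pn a (Suc k)) = min 6 (min 6 (a k))" by (simp add: pn_def)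
  show ?thesis unfolding stS_def step_def using A B C D by (simp add: add.assoc)
qed

lemma stS_0: "stS a b 0 = (0,0,0,0)"
  by (simp add: stS_def p2_def p1_def pc_def pn_def)

lemma feasible:
  assumes "covc a b (k-2) \<ge> 6"
  shows "fst (stS a b k) \<le> min 6 (a k)"
proof (cases "k < 2")
  case True then show ?thesis by (simp add: stS_def p2_def)
next
  case False
  then have "covc a b (k-2) = p2 a b k + a k"
    by (cases k rule: nat_cases4; simp add: covc_def p2_def)
  then show ?thesis using assms by (simp add: stS_def)
qed

lemma seq_bound:
  fixes a b :: "nat \<Rightarrow> nat"
  assumes zero: "\<And>c. c \<ge> m \<Longrightarrow> a c = 0 \<and> b c = 0"
    and cov: "\<And>i. i < m \<Longrightarrow> covc a b i \<ge> 6"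
    and m1: "m \<ge> 1"
  shows "m + 1 \<le> (\<Sum>c<m. 2 * a c + b c)"
proof -
  let ?a = "\<lambda>c. min 6 (a c)" and ?b = "\<lambda>c. min 6 (b c)"
  have inv: "\<exists>p. map_of pitab (stS a b k) = Some p \<and>
      int k + 1 - p \<le> int (\<Sum>c<k. 2 * ?a c + ?b c)" if "1 \<le> k" "k \<le> m" for k
    using that
  proof (induction k)
    case 0 then show ?case by simp
  next
    case (Suc k)
    have fk: "fst (stS a b k) \<le> ?a k"
      by (rule feasible) (use Suc.prems cov[of "k-2"] in simp)
    show ?case
    proof (cases "k = 0")
      case True
      obtain q where q: "map_of pitab (step (0,0,0,0) (?a 0) (?b 0)) = Some q" "2 \<le> int (2 * ?a 0 + ?b 0) + q"
        using map_of_first[of "?a 0" "?b 0"] by auto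
      show ?thesis using q True by (simp add: stS_Suc stS_0)
    next
      case False
      then obtain p where p: "map_of pitab (stS a b k) = Some p" "int k + 1 - p \<le> int (\<Sum>c<k. 2 * ?a c + ?b c)"
        using Suc by auto
      obtain q where q: "map_of pitab (step (stS a b k) (?a k) (?b k)) = Some q"
          "p \<le> int (2 * ?a k + ?b k) - 1 + q"
        using map_of_step[OF p(1), of "?a k" "?b k"] fk by auto
      show ?thesis using p q by (simp add: stS_Suc)
    qed
  qed
  obtain p where p: "map_of pitab (stS a b m) = Some p" "int m + 1 - p \<le> int (\<Sum>c<m. 2 * ?a c + ?b c)"
    using inv[OF m1 order_refl] by auto
  have z1: "a m = 0" "b m = 0" "a (m+1) = 0" "b (m+1) = 0" using zero by auto
  have f1: "fst (stS a b m) = 0"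
  proof (cases "m < 2")
    case True then show ?thesis by (simp add: stS_def p2_def)
  next
    case False
    then have "covc a b (m-2) = p2 a b m"
      using z1 by (cases m rule: nat_cases4; simp add: covc_def p2_def)
    moreover have "covc a b (m-2) \<ge> 6" using cov False by simp
    ultimately show ?thesis by (simp add: stS_def)
  qed
  have f2: "fst (snd (stS a b m)) = 0"
  proof -
    have "covc a b (m-1) = p1 a b m"
      using z1 m1 by (cases m rule: nat_cases4; simp add: covc_def p1_def)
    moreover have "covc a b (m-1) \<ge> 6" using cov m1 by simp
    ultimately show ?thesis by (simp add: stS_def)
  qed
  have "p \<le> 0" using map_of_final[OF p(1) f1 f2] .
  moreover have "(\<Sum>c<m. 2 * ?a c + ?b c) \<le> (\<Sum>c<m. 2 * a c + b c)"
    by (rule sum_mono) auto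
  ultimately show ?thesis using p(2) by linarith
qed



definition cd :: "nat \<Rightarrow> nat \<Rightarrow> nat" where
  "cd j j' = min ((j' + 6 - j) mod 6) ((j + 6 - j') mod 6)"

definition ndist :: "nat \<Rightarrow> nat \<Rightarrow> nat" where
  "ndist i c = (if i \<le> c then c - i else i - c)"

definition DD :: "nat \<times> nat \<Rightarrow> nat \<times> nat \<Rightarrow> nat" where
  "DD u v = ndist (fst u) (fst v) + cd (snd u) (snd v)"

lemma less6: "(j::nat) < 6 \<Longrightarrow> j = 0 \<or> j = 1 \<or> j = 2 \<or> j = 3 \<or> j = 4 \<or> j = 5"
  by auto

lemma all6: "list_all P [0..<6] \<Longrightarrow> (j::nat) < 6 \<Longrightarrow> P j"
  by (simp add: list_all_iff)

lemma cd_step_tab: "list_all (\<lambda>j. list_all (\<lambda>y. cd j ((y+1) mod 6) \<le> cd j y + 1 \<and> cd j y \<le> cd j ((y+1) mod 6) + 1) [0..<6]) [0..<6]"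
  by code_simp

lemma cd_step:
  assumes "j < 6" "y < 6"
  shows "cd j ((y+1) mod 6) \<le> cd j y + 1 \<and> cd j y \<le> cd j ((y+1) mod 6) + 1"
  using all6[OF all6[OF cd_step_tab assms(1)] assms(2)] .

lemma walk_lb:
  assumes "(grid_E m ^^ k) u v" "snd u < 6"
  shows "DD u v \<le> k"
  using assms(1)
proof (induction k arbitrary: v)
  case 0 then show ?case by (simp add: DD_def ndist_def cd_def)
next
  case (Suc k)
  from Suc.prems obtain y where y: "(grid_E m ^^ k) u y" "grid_E m y v" by (rule relpowp_Suc_E)
  have IH: "DD u y \<le> k" using Suc.IH y(1) .
  show ?case
  proof (cases "path_adj m (fst y) (fst v) \<and> snd y = snd v")
    case True
    then have "ndist (fst u) (fst v) \<le> ndist (fst u) (fst y) + 1"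
      by (auto simp: path_adj_def ndist_def)
    then show ?thesis using IH True by (simp add: DD_def)
  next
    case False
    then have F: "fst y = fst v" "cycle_adj 6 (snd y) (snd v)"
      using y(2) by (auto simp: grid_E_def cart_adj_def)
    have "cd (snd u) (snd v) \<le> cd (snd u) (snd y) + 1"
      using F(2) cd_step[OF assms(2), of "snd y"] cd_step[OF assms(2), of "snd v"]
      by (auto simp: cycle_adj_def)
    then show ?thesis using IH F by (simp add: DD_def)
  qed
qed

lemma E_right: "i + 1 < m \<Longrightarrow> grid_E m (i, j) (i + 1, j)"
  by (simp add: grid_E_def cart_adj_def path_adj_def)
lemma E_left: "i + 1 < m \<Longrightarrow> grid_E m (i + 1, j) (i, j)"
  by (simp add: grid_E_def cart_adj_def path_adj_def)
lemma E_up: "x < 6 \<Longrightarrow> grid_E m (c, x) (c, (x + 1) mod 6)"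
  by (auto simp: grid_E_def cart_adj_def cycle_adj_def mod_Suc)
lemma E_down: "x < 6 \<Longrightarrow> grid_E m (c, (x + 1) mod 6) (c, x)"
  by (auto simp: grid_E_def cart_adj_def cycle_adj_def mod_Suc)

lemma walk_right: "i + d < m \<Longrightarrow> (grid_E m ^^ d) (i, j) (i + d, j)"
proof (induction d)
  case 0 then show ?case by simp
next
  case (Suc d)
  then have "(grid_E m ^^ d) (i, j) (i + d, j)" by simp
  moreover have "grid_E m (i + d, j) (i + Suc d, j)" using Suc.prems E_right[of "i+d" m j] by simp
  ultimately show ?case using relpowp_Suc_I by metis
qed

lemma walk_left: "i + d < m \<Longrightarrow> (grid_E m ^^ d) (i + d, j) (i, j)"
proof (induction d)
  case 0 then show ?case by simp
next
  case (Suc d)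
  then have "(grid_E m ^^ d) (i + d, j) (i, j)" by simp
  moreover have "grid_E m (i + Suc d, j) (i + d, j)" using Suc.prems E_left[of "i+d" m j] by simp
  ultimately show ?case using relpowp_Suc_I2 by metis
qed

lemma walk_up: "j < 6 \<Longrightarrow> (grid_E m ^^ d) (c, j) (c, (j + d) mod 6)"
proof (induction d)
  case 0 then show ?case by simp
next
  case (Suc d)
  then have IH: "(grid_E m ^^ d) (c, j) (c, (j + d) mod 6)" by simp
  have "grid_E m (c, (j + d) mod 6) (c, ((j + d) mod 6 + 1) mod 6)" by (rule E_up) simp
  moreover have "((j + d) mod 6 + 1) mod 6 = (j + Suc d) mod 6" by (simp add: mod_Suc)
  ultimately have "grid_E m (c, (j + d) mod 6) (c, (j + Suc d) mod 6)" by simp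
  then show ?case by (rule relpowp_Suc_I[OF IH])
qed

lemma walk_down: "j < 6 \<Longrightarrow> (grid_E m ^^ d) (c, (j + d) mod 6) (c, j)"
proof (induction d)
  case 0 then show ?case by simp
next
  case (Suc d)
  then have IH: "(grid_E m ^^ d) (c, (j + d) mod 6) (c, j)" by simp
  have "grid_E m (c, ((j + d) mod 6 + 1) mod 6) (c, (j + d) mod 6)" by (rule E_down) simp
  moreover have "((j + d) mod 6 + 1) mod 6 = (j + Suc d) mod 6" by (simp add: mod_Suc)
  ultimately have "grid_E m (c, (j + Suc d) mod 6) (c, (j + d) mod 6)" by simp
  then show ?case by (rule relpowp_Suc_I2[OF _ IH])
qed

lemma cd_cases_tab: "list_all (\<lambda>j. list_all (\<lambda>j'. (j + cd j j') mod 6 = j' \<or> (j' + cd j j') mod 6 = j) [0..<6]) [0..<6]"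
  by code_simp

lemma cd_cases:
  assumes "j < 6" "j' < 6"
  shows "(j + cd j j') mod 6 = j' \<or> (j' + cd j j') mod 6 = j"
  using all6[OF all6[OF cd_cases_tab assms(1)] assms(2)] .

lemma walk_ex:
  assumes "u \<in> grid_V m" "v \<in> grid_V m"
  shows "(grid_E m ^^ DD u v) u v"
proof -
  obtain i j c j' where uv: "u = (i, j)" "v = (c, j')" "i < m" "c < m" "j < 6" "j' < 6"
    using assms by (cases u; cases v; auto simp: grid_V_def)
  have H: "(grid_E m ^^ ndist i c) (i, j) (c, j)"
  proof (cases "i \<le> c")
    case True
    then show ?thesis using walk_right[of i "c - i" m j] uv by (simp add: ndist_def)
  next
    case False
    then show ?thesis using walk_left[of c "i - c" m j] uv by (simp add: ndist_def)
  qed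
  have V: "(grid_E m ^^ cd j j') (c, j) (c, j')"
    using cd_cases[OF uv(5,6)] walk_up[OF uv(5), where m=m and d="cd j j'" and c=c] walk_down[OF uv(6), where m=m and d="cd j j'" and c=c]
    by auto
  have "(grid_E m ^^ (ndist i c + cd j j')) (i, j) (c, j')"
    unfolding relpowp_add using H V by blast
  then show ?thesis using uv by (simp add: DD_def)
qed

lemma gdist_eq_DD:
  assumes "u \<in> grid_V m" "v \<in> grid_V m"
  shows "gdist (grid_E m) u v = DD u v"
proof -
  have w: "(grid_E m ^^ DD u v) u v" by (rule walk_ex[OF assms])
  have le: "gdist (grid_E m) u v \<le> DD u v" unfolding gdist_def using w by (rule Least_le)
  have "(grid_E m ^^ gdist (grid_E m) u v) u v" unfolding gdist_def using w by (rule LeastI)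
  moreover have "snd u < 6" using assms by (auto simp: grid_V_def)
  ultimately have "DD u v \<le> gdist (grid_E m) u v" using walk_lb by blast
  then show ?thesis using le by simp
qed

definition bnd :: "nat \<Rightarrow> nat \<Rightarrow> nat" where
  "bnd r t = (if r = 2 then (if t = 0 then 5 else if t = 1 then 3 else if t = 2 then 1 else 0)
     else if r = 1 then (if t = 0 then 3 else if t = 1 then 1 else 0) else 0)"

lemma set_filter6: "{j. j < (6::nat) \<and> P j} = set (filter P [0..<6])"
  by auto

lemma ball_tab: "list_all (\<lambda>j'. list_all (\<lambda>k. length (filter (\<lambda>j. cd j j' \<le> k) [0..<6]) \<le> 2 * k + 1) [0,1,2]) [0..<6]"
  by code_simp

lemma ball_k:
  assumes "j' < 6" "k \<le> 2"
  shows "card {j. j < 6 \<and> cd j j' \<le> k} \<le> 2 * k + 1"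
proof -
  have k3: "k \<in> set [0,1,2]" using assms(2) by auto
  have "card {j. j < 6 \<and> cd j j' \<le> k} \<le> length (filter (\<lambda>j. cd j j' \<le> k) [0..<6])"
    unfolding set_filter6 by (rule card_length)
  also have "\<dots> \<le> 2 * k + 1"
    using all6[OF ball_tab assms(1)] k3 unfolding list_all_iff by blast
  finally show ?thesis .
qed

lemma card_ball:
  assumes "j' < 6" "0 < r" "r \<le> 2"
  shows "card {j. j < 6 \<and> t + cd j j' \<le> r} \<le> bnd r t"
proof (cases "t \<le> r")
  case False
  then have E: "{j. j < 6 \<and> t + cd j j' \<le> r} = {}" by auto
  show ?thesis unfolding E by simp
next
  case True
  have E: "{j. j < 6 \<and> t + cd j j' \<le> r} = {j. j < 6 \<and> cd j j' \<le> r - t}" using True by auto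
  have "card {j. j < 6 \<and> cd j j' \<le> r - t} \<le> 2 * (r - t) + 1"
    by (rule ball_k[OF assms(1)]) (use assms in simp)
  also have "\<dots> = bnd r t" using True assms(2,3) by (auto simp: bnd_def)
  finally show ?thesis unfolding E .
qed

lemma finite_grid: "finite (grid_V m)"
  by (simp add: grid_V_def)

lemma cover:
  assumes lb: "limited_broadcast 2 (grid_V m) f"
    and dom: "dominating_broadcast (grid_V m) (grid_E m) f"
    and im: "i < m"
  shows "6 \<le> (\<Sum>v\<in>grid_V m. bnd (f v) (ndist i (fst v)))"
proof -
  let ?H = "\<lambda>v. {j. j < 6 \<and> hears (grid_E m) f (i, j) v}"
  have sub: "{..<6} \<subseteq> (\<Union>v\<in>grid_V m. ?H v)"
  proof
    fix j assume "j \<in> {..<(6::nat)}"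
    then have "(i, j) \<in> grid_V m" using im by (simp add: grid_V_def)
    then obtain v where "v \<in> grid_V m" "hears (grid_E m) f (i, j) v"
      using dom unfolding dominating_broadcast_def by blast
    then show "j \<in> (\<Union>v\<in>grid_V m. ?H v)" using \<open>j \<in> {..<6}\<close> by auto
  qed
  have "6 = card {..<(6::nat)}" by simp
  also have "\<dots> \<le> card (\<Union>v\<in>grid_V m. ?H v)"
    by (rule card_mono[OF _ sub]) (auto intro: finite_subset[of _ "{..<6}"])
  also have "\<dots> \<le> (\<Sum>v\<in>grid_V m. card (?H v))"
    by (rule card_UN_le[OF finite_grid])
  also have "\<dots> \<le> (\<Sum>v\<in>grid_V m. bnd (f v) (ndist i (fst v)))"
  proof (rule sum_mono)
    fix v assume v: "v \<in> grid_V m"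
    obtain c j' where cj: "v = (c, j')" "c < m" "j' < 6" using v by (cases v) (auto simp: grid_V_def)
    have fv: "f v \<le> 2" using lb v by (simp add: limited_broadcast_def)
    show "card (?H v) \<le> bnd (f v) (ndist i (fst v))"
    proof (cases "f v = 0")
      case True
      then have E: "?H v = {}" by (auto simp: hears_def)
      have "card (?H v) = 0" unfolding E by (rule card.empty)
      then show ?thesis by linarith
    next
      case False
      then have fv0: "0 < f v" by simp
    have "?H v \<subseteq> {j. j < 6 \<and> ndist i c + cd j j' \<le> f v}"
    proof
      fix j assume "j \<in> ?H v"
      then have j: "j < 6" "gdist (grid_E m) (i, j) v \<le> f v" by (auto simp: hears_def)
      have "(i, j) \<in> grid_V m" using j im by (simp add: grid_V_def)
      then have "gdist (grid_E m) (i, j) v = ndist i c + cd j j'"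
        using gdist_eq_DD[OF _ v] cj by (simp add: DD_def)
      then show "j \<in> {j. j < 6 \<and> ndist i c + cd j j' \<le> f v}" using j by simp
    qed
    then have "card (?H v) \<le> card {j. j < 6 \<and> ndist i c + cd j j' \<le> f v}"
      by (rule card_mono[rotated]) simp
    also have "\<dots> \<le> bnd (f v) (ndist i c)" by (rule card_ball[OF cj(3) fv0 fv])
    finally show ?thesis using cj by simp
    qed
  qed
  finally show ?thesis .
qed

definition AA :: "(nat \<times> nat \<Rightarrow> nat) \<Rightarrow> nat \<Rightarrow> nat" where
  "AA f c = (\<Sum>j<6. if f (c, j) = 2 then 1 else 0)"
definition BB :: "(nat \<times> nat \<Rightarrow> nat) \<Rightarrow> nat \<Rightarrow> nat" where
  "BB f c = (\<Sum>j<6. if f (c, j) = 1 then 1 else 0)"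

lemma sum_grid: "(\<Sum>v\<in>grid_V m. g v) = (\<Sum>c<m. \<Sum>j<6. g (c, j))"
  unfolding grid_V_def by (simp add: sum.cartesian_product)

lemma bnd_split: "x \<le> 2 \<Longrightarrow> bnd x t = (if x = 2 then 1 else 0) * bnd 2 t + (if x = 1 then 1 else 0) * bnd 1 t"
  by (auto simp: bnd_def)

lemma val_split: "(x::nat) \<le> 2 \<Longrightarrow> x = 2 * (if x = 2 then 1 else 0) + (if x = 1 then 1 else 0)"
  by auto

lemma window:
  assumes "i + 3 \<le> N"
  shows "(\<Sum>c<N. a c * bnd 2 (ndist i c) + b c * bnd 1 (ndist i c)) = covc a b i"
proof -
  let ?g = "\<lambda>c. a c * bnd 2 (ndist i c) + b c * bnd 1 (ndist i c)"
  have "(\<Sum>c<N. ?g c) = (\<Sum>c<i+3. ?g c)"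
    by (rule sum.mono_neutral_right) (use assms in \<open>auto simp: bnd_def ndist_def\<close>)
  also have "\<dots> = covc a b i"
  proof (cases i rule: nat_cases4)
    case (5 k)
    obtain j where j: "i = j + 2" using 5 by (intro that[of "Suc (Suc k)"]) simp
    have z: "(\<Sum>c<j. ?g c) = 0"
      by (rule sum.neutral) (use j in \<open>auto simp: bnd_def ndist_def\<close>)
    have "(\<Sum>c<i+3. ?g c) = (\<Sum>c<j. ?g c) + ?g j + ?g (j+1) + ?g (j+2) + ?g (j+3) + ?g (j+4)"
      using j by (simp add: eval_nat_numeral)
    then show ?thesis using z j by (simp add: covc_def bnd_def ndist_def eval_nat_numeral)
  qed (simp_all add: covc_def bnd_def ndist_def eval_nat_numeral)
  finally show ?thesis .
qed


lemma cost_eq: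
  assumes lb: "limited_broadcast 2 (grid_V m) f"
  shows "broadcast_cost (grid_V m) f = (\<Sum>c<m. 2 * AA f c + BB f c)"
proof -
  have "broadcast_cost (grid_V m) f = (\<Sum>c<m. \<Sum>j<6. f (c, j))"
    unfolding broadcast_cost_def by (rule sum_grid)
  also have "\<dots> = (\<Sum>c<m. \<Sum>j<6. 2 * (if f (c, j) = 2 then 1 else 0) + (if f (c, j) = 1 then 1 else 0))"
  proof (rule sum.cong[OF refl], rule sum.cong[OF refl])
    fix c j assume "c \<in> {..<m}" "j \<in> {..<(6::nat)}"
    then have "f (c, j) \<le> 2" using lb by (auto simp: limited_broadcast_def grid_V_def)
    then show "f (c, j) = 2 * (if f (c, j) = 2 then 1 else 0) + (if f (c, j) = 1 then 1 else 0)"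
      by (rule val_split)
  qed
  also have "\<dots> = (\<Sum>c<m. 2 * AA f c + BB f c)"
    by (simp add: AA_def BB_def sum.distrib sum_distrib_left)
  finally show ?thesis .
qed

lemma cover_covc:
  assumes lb: "limited_broadcast 2 (grid_V m) f"
    and dom: "dominating_broadcast (grid_V m) (grid_E m) f"
    and im: "i < m"
  shows "6 \<le> covc (AA f) (BB f) i"
proof -
  have "6 \<le> (\<Sum>v\<in>grid_V m. bnd (f v) (ndist i (fst v)))" by (rule cover[OF lb dom im])
  also have "\<dots> = (\<Sum>c<m. \<Sum>j<6. bnd (f (c, j)) (ndist i c))" by (simp add: sum_grid)
  also have "\<dots> = (\<Sum>c<m. \<Sum>j<6. (if f (c, j) = 2 then 1 else 0) * bnd 2 (ndist i c)
                     + (if f (c, j) = 1 then 1 else 0) * bnd 1 (ndist i c))"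
  proof (rule sum.cong[OF refl], rule sum.cong[OF refl])
    fix c j assume "c \<in> {..<m}" "j \<in> {..<(6::nat)}"
    then have "f (c, j) \<le> 2" using lb by (auto simp: limited_broadcast_def grid_V_def)
    then show "bnd (f (c, j)) (ndist i c) = (if f (c, j) = 2 then 1 else 0) * bnd 2 (ndist i c)
                     + (if f (c, j) = 1 then 1 else 0) * bnd 1 (ndist i c)"
      by (rule bnd_split)
  qed
  also have "\<dots> = (\<Sum>c<m. AA f c * bnd 2 (ndist i c) + BB f c * bnd 1 (ndist i c))"
    by (simp add: AA_def BB_def sum.distrib sum_distrib_right)
  also have "\<dots> = (\<Sum>c<m + i + 3. AA f c * bnd 2 (ndist i c) + BB f c * bnd 1 (ndist i c))"
  proof (rule sum.mono_neutral_left)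
    show "\<forall>c\<in>{..<m + i + 3} - {..<m}. AA f c * bnd 2 (ndist i c) + BB f c * bnd 1 (ndist i c) = 0"
    proof
      fix c assume "c \<in> {..<m + i + 3} - {..<m}"
      then have "c \<ge> m" by simp
      then have "\<And>j. f (c, j) = 0" using lb by (auto simp: limited_broadcast_def grid_V_def)
      then show "AA f c * bnd 2 (ndist i c) + BB f c * bnd 1 (ndist i c) = 0"
        by (simp add: AA_def BB_def)
    qed
  qed auto
  also have "\<dots> = covc (AA f) (BB f) i" by (rule window) simp
  finally show ?thesis .
qed

lemma lower:
  assumes "m \<ge> 1" "limited_broadcast 2 (grid_V m) f"
    "dominating_broadcast (grid_V m) (grid_E m) f"
  shows "m + 1 \<le> broadcast_cost (grid_V m) f"
proof -
  have z: "AA f c = 0 \<and> BB f c = 0" if "c \<ge> m" for c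
  proof -
    have "\<And>j. f (c, j) = 0" using assms(2) that by (auto simp: limited_broadcast_def grid_V_def)
    then show ?thesis by (simp add: AA_def BB_def)
  qed
  have "m + 1 \<le> (\<Sum>c<m. 2 * AA f c + BB f c)"
    by (rule seq_bound[OF z cover_covc[OF assms(2,3)] assms(1)])
  then show ?thesis using cost_eq[OF assms(2)] by simp
qed

definition rr :: "nat \<Rightarrow> nat" where
  "rr c = 3 * ((c div 2) mod 2)"

definition f0 :: "nat \<Rightarrow> nat \<times> nat \<Rightarrow> nat" where
  "f0 m v = (case v of (c, j) \<Rightarrow> if c < m \<and> j < 6 then
      (if even c \<and> j = rr c then 2 else if odd c \<and> c + 1 = m \<and> j = 3 - rr c then 1 else 0) else 0)"

lemma rr_cases: "rr c = 0 \<or> rr c = 3"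
  by (auto simp: rr_def)

lemma rr_plus2: "rr (c + 2) = 3 - rr c"
  by (auto simp: rr_def mod_Suc)

lemma rr_odd1: "odd c \<Longrightarrow> rr (c - 1) = rr c"
  by (auto simp: rr_def elim!: oddE)

lemma rr_odd2: "odd c \<Longrightarrow> rr (c + 1) = 3 - rr c"
  by (auto simp: rr_def mod_Suc elim!: oddE)

lemma rr_minus2:
  assumes "c \<ge> 2" shows "rr (c - 2) = 3 - rr c"
proof -
  have eq: "c - 2 + 2 = c" using assms by simp
  have "rr c = 3 - rr (c - 2)" using rr_plus2[of "c - 2"] unfolding eq .
  then show ?thesis using rr_cases[of "c - 2"] by auto
qed

lemma brute_tab: "list_all (\<lambda>j. list_all (\<lambda>r. (cd j r \<le> 2 \<or> cd j (3 - r) = 0) \<and> (cd j r \<le> 1 \<or> cd j (3 - r) \<le> 1)) [0,3]) [0..<6]"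
  by code_simp

lemma brute1: "j < 6 \<Longrightarrow> r = 0 \<or> r = 3 \<Longrightarrow> cd j r \<le> 2 \<or> cd j (3 - r) = 0"
  using all6[OF brute_tab, of j] by auto

lemma brute2: "j < 6 \<Longrightarrow> r = 0 \<or> r = 3 \<Longrightarrow> cd j r \<le> 1 \<or> cd j (3 - r) \<le> 1"
  using all6[OF brute_tab, of j] by auto

lemma f0_limited: "limited_broadcast 2 (grid_V m) (f0 m)"
  by (auto simp: limited_broadcast_def f0_def grid_V_def)

lemma f0_hears:
  assumes "(i, j) \<in> grid_V m" "(c, j') \<in> grid_V m" "ndist i c + cd j j' \<le> f0 m (c, j')" "0 < f0 m (c, j')"
  shows "\<exists>v\<in>grid_V m. hears (grid_E m) (f0 m) (i, j) v"
  using assms gdist_eq_DD[OF assms(1,2)] by (auto simp: hears_def DD_def)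

lemma f0_dom:
  assumes m3: "m \<ge> 3"
  shows "dominating_broadcast (grid_V m) (grid_E m) (f0 m)"
  unfolding dominating_broadcast_def
proof
  fix u assume u: "u \<in> grid_V m"
  obtain i j where ij: "u = (i, j)" "i < m" "j < 6" using u by (cases u) (auto simp: grid_V_def)
  have rr6a: "rr c < 6" for c using rr_cases[of c] by auto
  have rr6b: "3 - rr c < 6" for c by simp
  note rr6 = rr6a rr6b
  show "\<exists>v\<in>grid_V m. hears (grid_E m) (f0 m) u v"
  proof (cases "even i")
    case True
    show ?thesis
    proof (cases "cd j (rr i) \<le> 2")
      case True
      then show ?thesis using \<open>even i\<close> ij rr6
        by (intro f0_hears[of i j m i "rr i", folded ij(1)]) (auto simp: grid_V_def f0_def ndist_def)
    next
      case False
      then have c0: "cd j (3 - rr i) = 0" using brute1[OF ij(3) rr_cases] by auto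
      show ?thesis
      proof (cases "i + 2 < m")
        case True
        then show ?thesis using \<open>even i\<close> ij rr6 c0 rr_plus2[of i]
          by (intro f0_hears[of i j m "i+2" "3 - rr i", folded ij(1)]) (auto simp: grid_V_def f0_def ndist_def)
      next
        case False
        then have i2: "i \<ge> 2" using m3 \<open>even i\<close> by presburger
        then show ?thesis using \<open>even i\<close> ij rr6 c0 rr_minus2[of i]
          by (intro f0_hears[of i j m "i-2" "3 - rr i", folded ij(1)]) (auto simp: grid_V_def f0_def ndist_def)
      qed
    qed
  next
    case False
    show ?thesis
    proof (cases "cd j (rr i) \<le> 1")
      case True
      then show ?thesis using \<open>odd i\<close> ij rr6 rr_odd1[of i]
        by (intro f0_hears[of i j m "i-1" "rr i", folded ij(1)]) (auto simp: grid_V_def f0_def ndist_def)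
    next
      case c1: False
      then have c0: "cd j (3 - rr i) \<le> 1" using brute2[OF ij(3) rr_cases] by auto
      show ?thesis
      proof (cases "i + 1 < m")
        case True
        then show ?thesis using \<open>odd i\<close> ij rr6 c0 rr_odd2[of i]
          by (intro f0_hears[of i j m "i+1" "3 - rr i", folded ij(1)]) (auto simp: grid_V_def f0_def ndist_def)
      next
        case False
        then have "i + 1 = m" using ij by simp
        then show ?thesis using \<open>odd i\<close> ij rr6 c0
          by (intro f0_hears[of i j m i "3 - rr i", folded ij(1)]) (auto simp: grid_V_def f0_def ndist_def)
      qed
    qed
  qed
qed

lemma sum_even2: "(\<Sum>c<n. if even c then 2 else 0) = 2 * ((n + 1) div (2::nat))"
  by (induction n) auto

lemma f0_cost:
  assumes "m \<ge> 1"
  shows "broadcast_cost (grid_V m) (f0 m) = m + 1"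
proof -
  have rr6a: "rr c < 6" for c using rr_cases[of c] by auto
  have rr6b: "3 - rr c < 6" for c by simp
  note rr6 = rr6a rr6b
  have col: "(\<Sum>j<6. f0 m (c, j)) = (if even c then 2 else if c + 1 = m then 1 else 0)" if cm: "c < m" for c
  proof (cases "even c")
    case True
    have "(\<Sum>j<6. f0 m (c, j)) = (\<Sum>j<6. if j = rr c then 2 else 0)"
      by (rule sum.cong) (use True cm in \<open>auto simp: f0_def\<close>)
    also have "\<dots> = 2" using rr6a[of c] by (simp add: sum.delta)
    finally show ?thesis using True by simp
  next
    case False
    show ?thesis
    proof (cases "c + 1 = m")
      case True
      have "(\<Sum>j<6. f0 m (c, j)) = (\<Sum>j<6. if j = 3 - rr c then 1 else 0)"
        by (rule sum.cong) (use True False cm in \<open>auto simp: f0_def\<close>)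
      also have "\<dots> = 1" using rr6b[of c] by (simp add: sum.delta)
      finally show ?thesis using True False by simp
    next
      case c2: False
      have "(\<Sum>j<6. f0 m (c, j)) = (\<Sum>j<(6::nat). 0)"
        by (rule sum.cong) (use c2 False cm in \<open>auto simp: f0_def\<close>)
      then show ?thesis using c2 False by simp
    qed
  qed
  obtain n where n: "m = Suc n" using assms by (cases m) auto
  have "broadcast_cost (grid_V m) (f0 m) = (\<Sum>c<m. \<Sum>j<6. f0 m (c, j))"
    unfolding broadcast_cost_def by (rule sum_grid)
  also have "\<dots> = (\<Sum>c<m. if even c then 2 else if c + 1 = m then 1 else 0)"
    by (rule sum.cong) (auto simp: col)
  also have "\<dots> = (\<Sum>c<n. if even c then 2 else 0) + (if even n then 2 else 1)"
    using n by (simp add: sum.lessThan_Suc cong: if_cong)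
  also have "\<dots> = m + 1" unfolding sum_even2 using n by presburger
  finally show ?thesis .
qed

theorem corollary4p8:
  fixes m :: nat
  assumes "m \<ge> 3"
  shows "(m mod 4 = 0 \<longrightarrow> gamma_b 2 (grid_V m) (grid_E m) \<in> {m, m + 1})
       \<and> (m mod 4 \<noteq> 0 \<longrightarrow> gamma_b 2 (grid_V m) (grid_E m) = m + 1)"
proof -
  have "gamma_b 2 (grid_V m) (grid_E m) = m + 1"
    unfolding gamma_b_def
  proof (rule cInf_eq_minimum)
    show "m + 1 \<in> {broadcast_cost (grid_V m) f |f. limited_broadcast 2 (grid_V m) f \<and>
             dominating_broadcast (grid_V m) (grid_E m) f}"
      using f0_cost f0_limited f0_dom assms by (intro CollectI exI[of _ "f0 m"]) auto
  next
    fix x assume "x \<in> {broadcast_cost (grid_V m) f |f. limited_broadcast 2 (grid_V m) f \<and>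
             dominating_broadcast (grid_V m) (grid_E m) f}"
    then show "m + 1 \<le> x" using lower assms by auto
  qed
  then show ?thesis by simp
qed

end
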